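(* For integers $0\le k\le n$ define $$B_{n,k}=\sum_{j=0}^{n-k}(-1)^{n-k-j}\binom{n+1}{n-k-j}(2j+1)^n,$$ so that $a_{n,k}=B_{n,k}/(2^nn!)$ are the coefficients whose associated polynomial is $P_n(z)=z^n$. Then the $B_{n,k}$ are integers and, as formal power series in $z$, $$\sum_{n\ge0}\left(\sum_{k=0}^nB_{n,k}x^k\right)\frac{z^n}{n!}=\frac{(1-x)e^{(1-x)z}}{1-xe^{2z(1-x)}}.$$ Moreover $\sum_{k=0}^n B_{n,k}=2^nn!$, i.e. $a_{n,0}+\cdots+a_{n,n}=1$.
   Context: $\imath=\sqrt{-1}$. $\mathcal{A}$ denotes the quotient of the free associative $\mathbb{C}$-algebra on two noncommuting generators $p,q$ by the two-sided ideal generated by $qp-pq-\imath$, and $z=\tfrac12(qp+pq)\in\mathcal A$. For complex numbers $a_{n,0},\dots,a_{n,n}$, the associated polynomial is the unique $P_n\in\mathbb C[X]$ of degree $\le n$ with $\sum_{k=0}^n a_{n,k}q^kp^nq^{n-k}=P_n(z)$ in $\mathcal A$. *)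

theory Defs
  imports Complex_Main "HOL-Computational_Algebra.Polynomial" "HOL-Computational_Algebra.Formal_Power_Series"
    "HOL-Computational_Algebra.Fraction_Field"
begin

text \<open>The numbers B(n,k), defined as rationals (so that integrality is a genuine claim).
  Only used for k \<le> n.\<close>
definition B :: "nat \<Rightarrow> nat \<Rightarrow> rat" where
  "B n k = (\<Sum>j = 0..n - k. (-1) ^ (n - k - j) * of_nat ((n + 1) choose (n - k - j))
                              * of_nat (2 * j + 1) ^ n)"

definition xvar :: "rat poly fract" where
  "xvar = Fract [:0, 1:] 1"

end

theory Submission
  imports Defs "HOL-Computational_Algebra.Polynomial_FPS"
begin

definition S :: "nat \<Rightarrow> rat fps" where "S n = Abs_fps (\<lambda>j. of_nat (2*j+1) ^ n)"

lemma C2: "fps_X * S n - (\<Sum>m\<le>n. fps_const (of_nat (n choose m) * (-2)^(n-m)) * S m)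
   = fps_const (-((-1)^n))"
proof (rule fps_ext)
  fix j
  have bin: "(a + (-2::rat))^n = (\<Sum>m\<le>n. of_nat (n choose m) * (-2)^(n-m) * a^m)" for a
    by (subst binomial_ring) (simp add: mult_ac)
  show "fps_nth (fps_X * S n - (\<Sum>m\<le>n. fps_const (of_nat (n choose m) * (-2)^(n-m)) * S m)) j = fps_nth (fps_const (-((-1)^n))) j"
  proof (cases j)
    case 0
    have "(\<Sum>m\<le>n. of_nat (n choose m) * (-2)^(n-m) * (1::rat)^m) = (1 + (-2))^n"
      by (rule bin[symmetric])
    then show ?thesis using 0 by (simp add: fps_sum_nth S_def)
  next
    case (Suc i)
    have "(\<Sum>m\<le>n. of_nat (n choose m) * (-2)^(n-m) * (of_nat (2*j+1)::rat)^m) = (of_nat (2*j+1) + (-2))^n"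
      by (rule bin[symmetric])
    also have "(of_nat (2*j+1) + (-2::rat)) = of_nat (2*i+1)" using Suc by simp
    finally show ?thesis using Suc by (simp add: fps_sum_nth S_def)
  qed
qed

lemma degree_u_pow: "degree ([:1,-1:]^k :: rat poly) \<le> k"
  using degree_power_le[of "[:1,-1:] :: rat poly" k] by simp

lemma D: "\<exists>P. degree P \<le> n \<and> (1 - fps_X)^(Suc n) * S n = fps_of_poly P \<and> poly P 1 = 2^n * fact n"
proof (induction n rule: less_induct)
  case (less n)
  have "\<forall>m. \<exists>P. m < n \<longrightarrow> degree P \<le> m \<and> (1 - fps_X)^(Suc m) * S m = fps_of_poly P \<and> poly P 1 = 2^m * fact m"
    using less by blast
  then obtain Q where Q: "\<And>m. m < n \<Longrightarrow> degree (Q m) \<le> m \<and> (1 - fps_X)^(Suc m) * S m = fps_of_poly (Q m) \<and> poly (Q m) 1 = 2^m * fact m"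
    by metis
  define u where "u = ([:1,-1:] :: rat poly)"
  have fu: "fps_of_poly u = (1 - fps_X :: rat fps)"
    unfolding u_def by (simp add: fps_of_poly_pCons fps_of_poly_const)
  define c where "c m = (of_nat (n choose m) * (-2)^(n-m) :: rat)" for m
  define P where "P = smult ((-1)^n) (u^n) - (\<Sum>m<n. smult (c m) (u^(n-m-1) * Q m))"
  let ?T = "1 - fps_X :: rat fps"
  have "fps_X * S n - (\<Sum>m\<le>n. fps_const (c m) * S m) = fps_const (-((-1)^n))"
    using C2[of n] unfolding c_def .
  moreover have "(\<Sum>m\<le>n. fps_const (c m) * S m) = (\<Sum>m<n. fps_const (c m) * S m) + S n"
    by (simp add: lessThan_Suc_atMost[symmetric] c_def)
  ultimately have e1: "(fps_X - 1) * S n = fps_const (-((-1)^n)) + (\<Sum>m<n. fps_const (c m) * S m)"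
    by (simp add: algebra_simps)
  have "?T^(Suc n) * S n = - (?T^n * ((fps_X - 1) * S n))"
    by (simp add: algebra_simps)
  also have "\<dots> = - (?T^n * fps_const (-((-1)^n))) - (\<Sum>m<n. fps_const (c m) * (?T^n * S m))"
    unfolding e1 by (simp add: algebra_simps sum_distrib_left)
  also have "(\<Sum>m<n. fps_const (c m) * (?T^n * S m)) = (\<Sum>m<n. fps_const (c m) * (?T^(n-m-1) * fps_of_poly (Q m)))"
  proof (rule sum.cong)
    fix m assume "m \<in> {..<n}"
    then have m: "m < n" by simp
    then have nn: "n = (n-m-1) + Suc m" by simp
    have pw: "?T^n = ?T^(n-m-1) * ?T^(Suc m)" by (subst nn) (rule power_add)
    have e: "?T^n * S m = ?T^(n-m-1) * fps_of_poly (Q m)"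
      using Q[OF m] pw by (metis mult.assoc)
    show "fps_const (c m) * (?T^n * S m) = fps_const (c m) * (?T^(n-m-1) * fps_of_poly (Q m))"
      by (simp only: e)
  qed simp
  also have "- (?T^n * fps_const (-((-1)^n))) - (\<Sum>m<n. fps_const (c m) * (?T^(n-m-1) * fps_of_poly (Q m))) = fps_of_poly P"
    unfolding P_def by (simp add: fps_of_poly_diff fps_of_poly_sum fps_of_poly_smult fps_of_poly_mult fps_of_poly_power fu mult.commute)
  finally have fP: "?T^(Suc n) * S n = fps_of_poly P" .
  have d1: "degree (smult ((-1)^n) (u^n)) \<le> n"
    using degree_u_pow[of n] unfolding u_def by (meson degree_smult_le order.trans)
  have d2: "degree (\<Sum>m<n. smult (c m) (u^(n-m-1) * Q m)) \<le> n"
  proof (rule degree_sum_le)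
    fix m assume "m \<in> {..<n}"
    then have m: "m < n" by simp
    have "degree (u^(n-m-1) * Q m) \<le> (n-m-1) + m"
      using degree_mult_le[of "u^(n-m-1)" "Q m"] degree_u_pow[of "n-m-1"] Q[OF m] unfolding u_def
      by linarith
    also have "\<dots> \<le> n" using m by simp
    finally show "degree (smult (c m) (u^(n-m-1) * Q m)) \<le> n"
      by (meson degree_smult_le order.trans)
  qed simp
  have dP: "degree P \<le> n"
    unfolding P_def by (rule degree_diff_le[OF d1 d2])
  have pP: "poly P 1 = 2^n * fact n"
  proof (cases n)
    case 0
    then show ?thesis unfolding P_def by simp
  next
    case (Suc k)
    have pu: "poly u 1 = 0" unfolding u_def by simp
    have "(\<Sum>m<n. poly (smult (c m) (u^(n-m-1) * Q m)) 1) = (\<Sum>m<k. poly (smult (c m) (u^(n-m-1) * Q m)) 1) + c k * poly (Q k) 1"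
      using Suc pu by simp
    also have "(\<Sum>m<k. poly (smult (c m) (u^(n-m-1) * Q m)) 1) = 0"
      using Suc pu by (intro sum.neutral) auto
    finally have "poly P 1 = - (c k * poly (Q k) 1)"
      unfolding P_def using Suc pu by (simp add: poly_sum)
    also have "\<dots> = 2^n * fact n"
      using Q[of k] Suc unfolding c_def by (simp add: algebra_simps)
    finally show ?thesis .
  qed
  show ?case using dP fP pP by blast
qed

lemma omX: "fps_nth ((1 - fps_X :: rat fps)^m) i = (-1)^i * of_nat (m choose i)"
proof -
  have "(1 - fps_X :: rat fps)^m = (- fps_X + 1)^m" by (simp only: diff_conv_add_uminus add.commute)
  also have "\<dots> = (\<Sum>k\<le>m. of_nat (m choose k) * (- fps_X)^k * 1^(m-k))"
    by (rule binomial_ring)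
  also have "\<dots> = (\<Sum>k\<le>m. fps_const (of_nat (m choose k) * (-1)^k) * fps_X^k)"
  proof (rule sum.cong)
    fix k
    have a: "(- fps_X :: rat fps)^k = fps_const ((-1)^k) * fps_X^k"
      by (induction k) (simp_all add: fps_const_neg[symmetric] del: fps_const_neg)
    have b: "(of_nat (m choose k) :: rat fps) = fps_const (of_nat (m choose k))"
      by (rule fps_of_nat[symmetric])
    show "of_nat (m choose k) * (- fps_X)^k * 1^(m-k) = fps_const (of_nat (m choose k) * (-1)^k) * (fps_X^k :: rat fps)"
      unfolding a b by (simp only: power_one mult_1_right fps_const_mult[symmetric] mult.assoc)
  qed (rule refl)
  finally have e: "(1 - fps_X :: rat fps)^m = (\<Sum>k\<le>m. fps_const (of_nat (m choose k) * (-1)^k) * fps_X^k)" .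
  have "fps_nth ((1 - fps_X :: rat fps)^m) i = (\<Sum>k\<le>m. if k = i then rat_of_nat (m choose k) * (- 1) ^ k else 0)"
    unfolding e fps_sum_nth by (intro sum.cong) auto
  also have "\<dots> = (-1)^i * of_nat (m choose i)"
    by (subst sum.delta) auto
  finally show ?thesis .
qed

definition H :: "nat \<Rightarrow> rat poly" where "H n = (\<Sum>k\<le>n. monom (B n k) (n-k))"

lemma coeff_H: "coeff (H n) i = (if i \<le> n then B n (n-i) else 0)"
proof -
  have "coeff (H n) i = (\<Sum>k\<le>n. if n - k = i then B n k else 0)"
    unfolding H_def coeff_sum by simp
  also have "\<dots> = (\<Sum>k\<in>{..n} \<inter> {k. n - k = i}. B n k)"
    by (simp add: sum.inter_restrict)
  also have "\<dots> = (if i \<le> n then B n (n-i) else 0)"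
  proof (cases "i \<le> n")
    case True
    then have "{..n} \<inter> {k. n - k = i} = {n-i}" by auto
    then show ?thesis using True by simp
  next
    case False
    then have "{..n} \<inter> {k. n - k = i} = {}" by auto
    then show ?thesis using False by simp
  qed
  finally show ?thesis .
qed

lemma C1: "fps_of_poly (H n) = (1 - fps_X)^(Suc n) * S n \<and> poly (H n) 1 = 2^n * fact n"
proof -
  obtain P where dP: "degree P \<le> n" and fP: "(1 - fps_X)^(Suc n) * S n = fps_of_poly P"
    and pP: "poly P 1 = 2^n * fact n"
    using D[of n] by blast
  have "P = H n"
  proof (rule poly_eqI)
    fix i
    show "coeff P i = coeff (H n) i"
    proof (cases "i \<le> n")
      case False
      then show ?thesis using dP by (simp add: coeff_H coeff_eq_0)
    next
      case True
      have "coeff P i = fps_nth ((1 - fps_X)^(Suc n) * S n) i"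
        using fP by simp
      also have "\<dots> = (\<Sum>j=0..i. (-1)^j * of_nat (Suc n choose j) * of_nat (2*(i-j)+1)^n)"
        by (simp only: fps_mult_nth omX S_def fps_nth_Abs_fps)
      also have "\<dots> = (\<Sum>j=0..i. (-1)^(i-j) * of_nat (Suc n choose (i-j)) * of_nat (2*j+1)^n)"
        by (subst sum.atLeastAtMost_rev) (intro sum.cong; auto)
      also have "\<dots> = B n (n-i)"
        unfolding B_def using True by simp
      finally show ?thesis using True by (simp add: coeff_H)
    qed
  qed
  then show ?thesis using fP pP by simp
qed

lemma part3: "(\<Sum>k\<le>n. B n k) = 2^n * fact n"
proof -
  have "poly (H n) 1 = (\<Sum>k\<le>n. B n k)"
    unfolding H_def by (simp add: poly_sum poly_monom)
  then show ?thesis using C1 by simp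
qed

lemma XmT: "(fps_X - 1 :: rat fps)^k = fps_const ((-1)^k) * (1 - fps_X)^k"
proof -
  have "(fps_X - 1 :: rat fps) = fps_const (-1) * (1 - fps_X)" by (simp add: algebra_simps)
  then have "(fps_X - 1 :: rat fps)^k = fps_const (-1)^k * (1 - fps_X)^k" by (simp only: power_mult_distrib)
  then show ?thesis by (simp only: fps_const_power)
qed

lemma Tside: "[:0,1:] * H n - (\<Sum>m\<le>n. smult (of_nat (n choose m) * 2^(n-m)) ([:-1,1:]^(n-m) * H m)) = [:-1,1:]^(Suc n)"
proof -
  let ?T = "1 - fps_X :: rat fps"
  have fl: "fps_of_poly [:-1,1:] = (fps_X - 1 :: rat fps)"
    using fps_of_poly_linear[of "-1::rat"] by simp
  have "fps_of_poly ([:0,1:] * H n - (\<Sum>m\<le>n. smult (of_nat (n choose m) * 2^(n-m)) ([:-1,1:]^(n-m) * H m)))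
     = fps_X * (?T^(Suc n) * S n) - (\<Sum>m\<le>n. fps_const (of_nat (n choose m) * 2^(n-m)) * ((fps_X - 1)^(n-m) * (?T^(Suc m) * S m)))"
    by (simp only: fps_of_poly_diff fps_of_poly_mult fps_of_poly_sum fps_of_poly_smult fps_of_poly_power fl fps_of_poly_fps_X C1)
  also have "(\<Sum>m\<le>n. fps_const (of_nat (n choose m) * 2^(n-m)) * ((fps_X - 1)^(n-m) * (?T^(Suc m) * S m)))
      = ?T^(Suc n) * (\<Sum>m\<le>n. fps_const (of_nat (n choose m) * (-2)^(n-m)) * S m)"
    unfolding sum_distrib_left
  proof (rule sum.cong)
    fix m assume "m \<in> {..n}"
    then have nn: "Suc n = (n - m) + Suc m" by simp
    have "fps_const (of_nat (n choose m) * 2^(n-m)) * ((fps_X - 1)^(n-m) * (?T^(Suc m) * S m))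
       = fps_const (of_nat (n choose m) * 2^(n-m) * (-1)^(n-m)) * (?T^(n-m) * ?T^(Suc m) * S m)"
      unfolding XmT by (simp add: mult_ac)
    also have "?T^(n-m) * ?T^(Suc m) = ?T^(Suc n)" by (subst nn) (rule power_add[symmetric])
    also have "(of_nat (n choose m) * 2^(n-m) * (-1)^(n-m) :: rat) = of_nat (n choose m) * (-2)^(n-m)"
      by (simp add: power_minus[of 2] mult_ac)
    finally show "fps_const (of_nat (n choose m) * 2^(n-m)) * ((fps_X - 1)^(n-m) * (?T^(Suc m) * S m))
       = ?T^(Suc n) * (fps_const (of_nat (n choose m) * (-2)^(n-m)) * S m)" by (simp add: mult_ac)
  qed simp
  finally have "fps_of_poly ([:0,1:] * H n - (\<Sum>m\<le>n. smult (of_nat (n choose m) * 2^(n-m)) ([:-1,1:]^(n-m) * H m)))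
     = ?T^(Suc n) * (fps_X * S n - (\<Sum>m\<le>n. fps_const (of_nat (n choose m) * (-2)^(n-m)) * S m))"
    by (simp add: algebra_simps)
  also have "\<dots> = ?T^(Suc n) * fps_const (-((-1)^n))" by (simp only: C2)
  also have "\<dots> = (fps_X - 1)^(Suc n)" by (simp add: XmT mult_ac)
  also have "\<dots> = fps_of_poly ([:-1,1:]^(Suc n))" by (simp only: fps_of_poly_power fl)
  finally show ?thesis by (simp only: fps_of_poly_eq_iff)
qed

definition bp :: "nat \<Rightarrow> rat poly" where "bp n = (\<Sum>k\<le>n. monom (B n k) k)"

lemma poly_bp: assumes "x \<noteq> 0" shows "poly (bp m) x = x^m * poly (H m) (1/x)"
proof -
  have "x^m * poly (H m) (1/x) = (\<Sum>k\<le>m. B m k * (x^m * (1/x)^(m-k)))"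
    unfolding H_def by (simp add: poly_sum poly_monom sum_distrib_left mult_ac)
  also have "\<dots> = (\<Sum>k\<le>m. B m k * x^k)"
  proof (rule sum.cong)
    fix k assume "k \<in> {..m}"
    then have "x^m = x^k * x^(m-k)" by (simp add: power_add[symmetric])
    then have "x^m * (1/x)^(m-k) = x^k * (x * (1/x))^(m-k)" by (simp only: power_mult_distrib mult.assoc)
    then show "B m k * (x^m * (1/x)^(m-k)) = B m k * x^k" using assms by simp
  qed simp
  finally show ?thesis unfolding bp_def by (simp add: poly_sum poly_monom)
qed

lemma Xside_pt:
  assumes x: "x \<noteq> 0"
  shows "poly (bp n - [:0,1:] * (\<Sum>m\<le>n. of_nat (n choose m) * (bp m * (2 * [:1,-1:])^(n-m)))) x
       = poly ([:1,-1:]^(Suc n)) x"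
proof -
  define t where "t = 1/x"
  have xt: "x * t = 1" using x unfolding t_def by simp
  have xt1: "x * (t - 1) = 1 - x" using xt by (simp add: algebra_simps)
  have T: "t * poly (H n) t - (\<Sum>m\<le>n. of_nat (n choose m) * 2^(n-m) * ((t - 1)^(n-m) * poly (H m) t)) = (t - 1)^(Suc n)"
    using arg_cong[OF Tside[of n], of "\<lambda>p. poly p t"] by (simp add: poly_sum algebra_simps)
  have f1: "x^(Suc n) * (t * poly (H n) t - (\<Sum>m\<le>n. of_nat (n choose m) * 2^(n-m) * ((t - 1)^(n-m) * poly (H m) t)))
    = x^(Suc n) * (t - 1)^(Suc n)" using T by simp
  have f2: "x^(Suc n) * (t - 1)^(Suc n) = (1 - x)^(Suc n)"
    by (simp only: power_mult_distrib[symmetric] xt1)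
  have f3: "x^(Suc n) * (t * poly (H n) t) = poly (bp n) x"
    using poly_bp[OF x, of n] xt x unfolding t_def by (simp add: mult_ac)
  have f4: "x^(Suc n) * (\<Sum>m\<le>n. of_nat (n choose m) * 2^(n-m) * ((t - 1)^(n-m) * poly (H m) t))
     = x * (\<Sum>m\<le>n. of_nat (n choose m) * (poly (bp m) x * (2 * (1 - x))^(n-m)))"
    unfolding sum_distrib_left
  proof (rule sum.cong)
    fix m assume "m \<in> {..n}"
    then have nn: "Suc n = Suc ((n-m) + m)" by simp
    have "x^(Suc n) = x * x^(n-m) * x^m" by (subst nn) (simp add: power_add mult_ac)
    then have "x^(Suc n) * (of_nat (n choose m) * 2^(n-m) * ((t - 1)^(n-m) * poly (H m) t))
       = x * (of_nat (n choose m) * (2^(n-m) * (x * (t - 1))^(n-m)) * (x^m * poly (H m) t))"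
      by (simp only: power_mult_distrib mult_ac)
    also have "x * (t - 1) = 1 - x" using xt by (simp add: algebra_simps)
    also have "x^m * poly (H m) t = poly (bp m) x" using poly_bp[OF x, of m] unfolding t_def by simp
    finally show "x^(Suc n) * (of_nat (n choose m) * 2^(n-m) * ((t - 1)^(n-m) * poly (H m) t))
       = x * (of_nat (n choose m) * (poly (bp m) x * (2 * (1 - x))^(n-m)))"
      by (simp only: power_mult_distrib mult_ac)
  qed simp
  have "x^(Suc n) * (t * poly (H n) t - (\<Sum>m\<le>n. of_nat (n choose m) * 2^(n-m) * ((t - 1)^(n-m) * poly (H m) t)))
     = poly (bp n) x - x * (\<Sum>m\<le>n. of_nat (n choose m) * (poly (bp m) x * (2 * (1 - x))^(n-m)))"
    by (simp only: right_diff_distrib f3 f4)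
  then have "poly (bp n) x - x * (\<Sum>m\<le>n. of_nat (n choose m) * (poly (bp m) x * (2 * (1 - x))^(n-m))) = (1 - x)^(Suc n)"
    using f1 f2 by simp
  moreover have "poly (bp n - [:0,1:] * (\<Sum>m\<le>n. of_nat (n choose m) * (bp m * (2 * [:1,-1:])^(n-m)))) x
    = poly (bp n) x - x * (\<Sum>m\<le>n. of_nat (n choose m) * (poly (bp m) x * (2 * (1 - x))^(n-m)))"
    by (simp add: poly_sum mult.commute)
  moreover have "poly ([:1,-1:]^(Suc n)) x = (1 - x)^(Suc n)" by (simp add: algebra_simps)
  ultimately show ?thesis by simp
qed

lemma Xside: "bp n - [:0,1:] * (\<Sum>m\<le>n. of_nat (n choose m) * (bp m * (2 * [:1,-1:])^(n-m))) = [:1,-1:]^(Suc n)"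
  (is "?L = ?R")
proof (rule ccontr)
  assume ne: "?L \<noteq> ?R"
  then have "?L - ?R \<noteq> 0" by simp
  then have fin: "finite {x. poly (?L - ?R) x = 0}" by (rule poly_roots_finite)
  have "UNIV - {0::rat} \<subseteq> {x. poly (?L - ?R) x = 0}"
    using Xside_pt by auto
  then have "finite (UNIV - {0::rat})" using fin finite_subset by blast
  then have "finite (UNIV :: rat set)" by simp
  then show False using infinite_UNIV_char_0 by blast
qed

lemma Fr_add: "Fract (p + q) 1 = Fract p 1 + Fract q 1" for p q :: "rat poly" by simp
lemma Fr_diff: "Fract (p - q) 1 = Fract p 1 - Fract q 1" for p q :: "rat poly" by simp
lemma Fr_mult: "Fract (p * q) 1 = Fract p 1 * Fract q 1" for p q :: "rat poly" by simp
lemma Fr_sum: "Fract (\<Sum>i\<in>A. f i) 1 = (\<Sum>i\<in>A. Fract (f i) 1)" for f :: "nat \<Rightarrow> rat poly"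
  by (induction A rule: infinite_finite_induct) (simp_all add: Zero_fract_def Fr_add)
lemma Fr_power: "Fract (p ^ k) 1 = Fract p 1 ^ k" for p :: "rat poly"
  by (induction k) (simp_all add: One_fract_def Fr_mult)
lemma Fr_of_nat: "Fract (of_nat k) 1 = (of_nat k :: rat poly fract)"
  by (rule Fract_of_nat_eq)

lemma of_nat_K_nz: "k \<noteq> 0 \<Longrightarrow> (of_nat k :: rat poly fract) \<noteq> 0"
  by (simp add: of_nat_fract Zero_fract_def eq_fract)

lemma XK: "Fract (bp n) 1 - xvar * (\<Sum>m\<le>n. of_nat (n choose m) * (Fract (bp m) 1 * (2 * (1 - xvar))^(n-m)))
   = (1 - xvar)^(Suc n)"
proof -
  have e: "Fract (bp n - [:0,1:] * (\<Sum>m\<le>n. of_nat (n choose m) * (bp m * (2 * [:1,-1:])^(n-m)))) 1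
        = Fract ([:1,-1:]^(Suc n)) 1"
    using Xside[of n] by simp
  have x1: "Fract [:1,-1:] 1 = 1 - xvar"
  proof -
    have "(1 - [:0,1:] :: rat poly) = [:1,-1:]" by (simp add: one_pCons)
    then show ?thesis unfolding xvar_def One_fract_def by (simp only: Fr_diff[symmetric])
  qed
  have two: "Fract (2 :: rat poly) 1 = 2"
    using Fract_of_nat_eq[of 2] by simp
  show ?thesis using e
    by (simp only: Fr_diff Fr_mult Fr_sum Fr_power Fr_of_nat x1 two xvar_def[symmetric])
qed

lemma Bint: "B n k \<in> \<int>"
  unfolding B_def by (intro Ints_sum Ints_mult Ints_power Ints_of_nat Ints_minus Ints_1)

lemma xvar_ne1: "1 - xvar \<noteq> 0"
proof -
  have "(1 - [:0,1:] :: rat poly) \<noteq> 0"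
  proof
    assume "(1 - [:0,1:] :: rat poly) = 0"
    then have "coeff (1 - [:0,1:] :: rat poly) 0 = 0" by simp
    then show False by simp
  qed
  then show ?thesis unfolding xvar_def One_fract_def Zero_fract_def
    by (simp add: eq_fract)
qed

lemma GF: "Abs_fps (\<lambda>n. Fract (\<Sum>k\<le>n. monom (B n k) k) 1 / of_nat (fact n))
        = fps_const (1 - xvar) * fps_exp (1 - xvar)
          / (1 - fps_const xvar * fps_exp (2 * (1 - xvar)))"
proof -
  define A where "A = Abs_fps (\<lambda>n. Fract (bp n) 1 / of_nat (fact n))"
  define c where "c = 2 * (1 - xvar)"
  define Dn where "Dn = 1 - fps_const xvar * fps_exp c"
  define N where "N = fps_const (1 - xvar) * fps_exp (1 - xvar)"
  have fnz: "(of_nat (fact k) :: rat poly fract) \<noteq> 0" for k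
    by (rule of_nat_K_nz) simp
  have AD: "A * Dn = N"
  proof (rule fps_ext)
    fix n
    have s: "fps_nth (A * (fps_const xvar * fps_exp c)) n
        = xvar * (\<Sum>m\<le>n. of_nat (n choose m) * (Fract (bp m) 1 * c^(n-m))) / of_nat (fact n)"
    proof -
      have "fps_nth (A * (fps_const xvar * fps_exp c)) n
          = (\<Sum>i=0..n. Fract (bp i) 1 / of_nat (fact i) * (xvar * (c^(n-i) / of_nat (fact (n-i)))))"
        unfolding fps_mult_nth[of A "fps_const xvar * fps_exp c"] by (simp add: A_def)
      also have "\<dots> = (\<Sum>i\<le>n. xvar * (of_nat (n choose i) * (Fract (bp i) 1 * c^(n-i))) / of_nat (fact n))"
      proof (rule sum.cong)
        fix i assume "i \<in> {..n}"
        then have i: "i \<le> n" by simp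
        have "(of_nat (fact n) :: rat poly fract) = of_nat (fact i) * of_nat (fact (n-i)) * of_nat (n choose i)"
          using binomial_fact_lemma[OF i] by (metis of_nat_mult)
        then show "Fract (bp i) 1 / of_nat (fact i) * (xvar * (c^(n-i) / of_nat (fact (n-i))))
          = xvar * (of_nat (n choose i) * (Fract (bp i) 1 * c^(n-i))) / of_nat (fact n)"
          using fnz[of i] fnz[of "n-i"] i by (simp add: field_simps)
      qed (simp add: atLeast0AtMost)
      also have "\<dots> = xvar * (\<Sum>m\<le>n. of_nat (n choose m) * (Fract (bp m) 1 * c^(n-m))) / of_nat (fact n)"
        by (simp add: sum_distrib_left sum_divide_distrib)
      finally show ?thesis .
    qed
    have "fps_nth (A * Dn) n = fps_nth A n - fps_nth (A * (fps_const xvar * fps_exp c)) n"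
      unfolding Dn_def by (simp add: right_diff_distrib)
    also have "\<dots> = (Fract (bp n) 1 - xvar * (\<Sum>m\<le>n. of_nat (n choose m) * (Fract (bp m) 1 * c^(n-m)))) / of_nat (fact n)"
      unfolding s by (simp add: A_def diff_divide_distrib)
    also have "\<dots> = (1 - xvar)^(Suc n) / of_nat (fact n)"
      using XK[of n] unfolding c_def by simp
    also have "\<dots> = fps_nth N n"
      unfolding N_def by simp
    finally show "fps_nth (A * Dn) n = fps_nth N n" .
  qed
  have D0: "fps_nth Dn 0 \<noteq> 0"
    unfolding Dn_def using xvar_ne1 by simp
  have "N / Dn = N * inverse Dn" by (rule fps_divide_unit[OF D0])
  also have "\<dots> = A * (Dn * inverse Dn)" unfolding AD[symmetric] by (simp add: mult.assoc)
  also have "\<dots> = A" using inverse_mult_eq_1'[OF D0] by simp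
  finally have "N / Dn = A" .
  then show ?thesis unfolding N_def Dn_def c_def A_def bp_def by simp
qed

theorem lemma6p1:
  shows "(\<forall>n k. k \<le> n \<longrightarrow> B n k \<in> \<int>)
    \<and> Abs_fps (\<lambda>n. Fract (\<Sum>k\<le>n. monom (B n k) k) 1 / of_nat (fact n))
        = fps_const (1 - xvar) * fps_exp (1 - xvar)
          / (1 - fps_const xvar * fps_exp (2 * (1 - xvar)))
    \<and> (\<forall>n. (\<Sum>k\<le>n. B n k) = 2 ^ n * fact n)"
  using Bint GF part3 by blast

end
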